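(* Let $V, K$ be positive integers, let $\boldsymbol\epsilon \in [0,1]^V$, and let $R$ be a finite set of rays with $|R| \ge K$, each ray $j\in R$ having a vector $\mathbf p_j=(p_{ij})_{i=1}^V \in [0,1]^V$. Run the greedy algorithm on $R$ for $K$ iterations: set $\mathbf b^0=\boldsymbol\epsilon$ and $A_0=R$; at iteration $t=1,\dots,K$ choose $j_t \in \arg\min_{j\in A_{t-1}} \sum_{i} b^{t-1}_i p_{ij}$ (ties broken arbitrarily), set $\mathbf b^t = \mathbf b^{t-1}\odot \mathbf p_{j_t}$ (coordinatewise product) and $A_t = A_{t-1}\setminus\{j_t\}$. Let $f^t=\sum_{i=1}^V b^t_i$, $E=\sum_{i=1}^V \epsilon_i$, and $$\mathrm{OPT} = \min_{S\subseteq R,\ |S|=K}\ \sum_{i=1}^V \prod_{j\in S} p_{ij}.$$ Then $$f^K \le \frac{E}{e} + \mathrm{OPT}\Big(1-\frac{1}{e}\Big),$$ where $e$ is Euler's number.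
   Context: Here $\epsilon_i$ models the expected reconstruction loss in voxel $i$ and $p_{ij}$ the probability that voxel $i$ is not covered by ray $j$; this is the single-position case ($L=1$) of the ray-planning problem. *)

theory Defs
  imports Complex_Main
begin

text \<open>Coverage-probability vector after t greedy picks: b^0 = eps, b^t = b^(t-1) (.) p_(j_t).
  Rays are of type 'r; p j i is the probability p_ij; voxels are indexed 1..V.\<close>
fun bvec :: "(nat \<Rightarrow> real) \<Rightarrow> ('r \<Rightarrow> nat \<Rightarrow> real) \<Rightarrow> (nat \<Rightarrow> 'r) \<Rightarrow> nat \<Rightarrow> nat \<Rightarrow> real" where
  "bvec eps p js 0 = eps"
| "bvec eps p js (Suc t) = (\<lambda>i. bvec eps p js t i * p (js (Suc t)) i)"

fun avail :: "'r set \<Rightarrow> (nat \<Rightarrow> 'r) \<Rightarrow> nat \<Rightarrow> 'r set" where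
  "avail R js 0 = R"
| "avail R js (Suc t) = avail R js t - {js (Suc t)}"

definition greedy_run :: "nat \<Rightarrow> nat \<Rightarrow> (nat \<Rightarrow> real) \<Rightarrow> 'r set \<Rightarrow> ('r \<Rightarrow> nat \<Rightarrow> real) \<Rightarrow> (nat \<Rightarrow> 'r) \<Rightarrow> bool" where
  "greedy_run V K eps R p js \<longleftrightarrow>
     (\<forall>t\<in>{1..K}. js t \<in> avail R js (t - 1) \<and>
        (\<forall>j\<in>avail R js (t - 1).
           (\<Sum>i=1..V. bvec eps p js (t - 1) i * p (js t) i) \<le> (\<Sum>i=1..V. bvec eps p js (t - 1) i * p j i)))"

definition OPT :: "nat \<Rightarrow> nat \<Rightarrow> 'r set \<Rightarrow> ('r \<Rightarrow> nat \<Rightarrow> real) \<Rightarrow> real" where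
  "OPT V K R p = Min ((\<lambda>S. \<Sum>i=1..V. \<Prod>j\<in>S. p j i) ` {S. S \<subseteq> R \<and> card S = K})"

end

theory Submission
  imports Defs
begin

lemma one_minus_prod_le:
  fixes x :: "'a \<Rightarrow> real"
  assumes "finite S" "\<forall>j\<in>S. 0 \<le> x j \<and> x j \<le> 1"
  shows "1 - (\<Prod>j\<in>S. x j) \<le> (\<Sum>j\<in>S. 1 - x j)"
  using assms
proof (induction S rule: finite_induct)
  case empty then show ?case by simp
next
  case (insert a S)
  have P: "0 \<le> (\<Prod>j\<in>S. x j)" "(\<Prod>j\<in>S. x j) \<le> 1" using insert by (auto intro: prod_nonneg prod_le_1)
  have xa: "0 \<le> x a" "x a \<le> 1" using insert by auto
  have "1 - x a * (\<Prod>j\<in>S. x j) \<le> (1 - x a) + (1 - (\<Prod>j\<in>S. x j))"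
    using mult_nonneg_nonneg[of "1 - x a" "1 - (\<Prod>j\<in>S. x j)"] P xa by (simp add: algebra_simps)
  then show ?case using insert by simp
qed

lemma prod_superset_le:
  fixes x :: "'a \<Rightarrow> real"
  assumes "finite B" "A \<subseteq> B" "\<forall>j\<in>B. 0 \<le> x j \<and> x j \<le> 1"
  shows "(\<Prod>j\<in>B. x j) \<le> (\<Prod>j\<in>A. x j)"
proof -
  have e: "(\<Prod>j\<in>B. x j) = (\<Prod>j\<in>B-A. x j) * (\<Prod>j\<in>A. x j)" using prod.subset_diff[OF assms(2,1)] by simp
  have a: "0 \<le> (\<Prod>j\<in>A. x j)" using assms by (auto intro!: prod_nonneg)
  have b: "(\<Prod>j\<in>B-A. x j) \<le> 1" using assms by (auto intro!: prod_le_1)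
  show ?thesis unfolding e using mult_right_mono[OF b a] by simp
qed

lemma avail_eq: "avail R js t = R - js ` {1..t}"
  by (induction t) (auto simp: atLeastAtMostSuc_conv)

lemma bvec_prod: "bvec eps p js t i = eps i * (\<Prod>s\<in>{1..t}. p (js s) i)"
  by (induction t) (auto simp: atLeastAtMostSuc_conv)

theorem theorem1:
  fixes V K :: nat and eps :: "nat \<Rightarrow> real" and R :: "'r set"
    and p :: "'r \<Rightarrow> nat \<Rightarrow> real" and js :: "nat \<Rightarrow> 'r"
  assumes "V > 0" and "K > 0"
    and "\<forall>i\<in>{1..V}. 0 \<le> eps i \<and> eps i \<le> 1"
    and "finite R" and "card R \<ge> K"
    and "\<forall>j\<in>R. \<forall>i\<in>{1..V}. 0 \<le> p j i \<and> p j i \<le> 1"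
    and "greedy_run V K eps R p js"
  shows "(\<Sum>i=1..V. bvec eps p js K i)
           \<le> (\<Sum>i=1..V. eps i) / exp 1 + OPT V K R p * (1 - 1 / exp 1)"
proof -
  define f where "f t = (\<Sum>i=1..V. bvec eps p js t i)" for t
  define E where "E = (\<Sum>i=1..V. eps i)"
  define Op where "Op = OPT V K R p"
  have g: "\<forall>t\<in>{1..K}. js t \<in> avail R js (t - 1) \<and>
        (\<forall>j\<in>avail R js (t - 1).
           (\<Sum>i=1..V. bvec eps p js (t - 1) i * p (js t) i) \<le> (\<Sum>i=1..V. bvec eps p js (t - 1) i * p j i))"
    using assms(7) unfolding greedy_run_def by blast
  have jsR: "js s \<in> R" if "s\<in>{1..K}" for s
    using g that avail_eq[of R js "s-1"] by blast
  have jsnot: "js s \<notin> js ` {1..s-1}" if "s\<in>{1..K}" for s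
    using g that avail_eq[of R js "s-1"] by blast
  have inj: "inj_on js {1..t}" if tK: "t \<le> K" for t
  proof (rule inj_onI)
    fix a b assume ab: "a\<in>{1..t}" "b\<in>{1..t}" "js a = js b"
    show "a = b"
    proof (rule ccontr)
      assume "a \<noteq> b"
      then consider "a < b" | "b < a" by linarith
      then show False
      proof cases
        case 1
        then have "a \<in> {1..b-1}" using ab by auto
        then have "js b \<in> js ` {1..b-1}" using ab by (metis image_eqI)
        then show False using jsnot[of b] ab tK by auto
      next
        case 2
        then have "b \<in> {1..a-1}" using ab by auto
        then have "js a \<in> js ` {1..a-1}" using ab by (metis image_eqI)
        then show False using jsnot[of a] ab tK by auto
      qed
    qed
  qed
  have bnd: "0 \<le> bvec eps p js t i \<and> bvec eps p js t i \<le> 1" if "t \<le> K" "i\<in>{1..V}" for t i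
    using that
  proof (induction t)
    case 0 then show ?case using assms(3) by simp
  next
    case (Suc t)
    have "js (Suc t) \<in> R" using jsR Suc.prems by auto
    then have "0 \<le> p (js (Suc t)) i \<and> p (js (Suc t)) i \<le> 1" using assms(6) Suc.prems by auto
    then show ?case using Suc by (auto intro: mult_le_one)
  qed
  have fin: "finite {S. S \<subseteq> R \<and> card S = K}"
    by (rule finite_subset[of _ "Pow R"]) (use assms(4) in auto)
  have ne: "{S. S \<subseteq> R \<and> card S = K} \<noteq> {}"
    using obtain_subset_with_card_n[OF assms(5)] by blast
  have "Op \<in> (\<lambda>S. \<Sum>i=1..V. \<Prod>j\<in>S. p j i) ` {S. S \<subseteq> R \<and> card S = K}"
    unfolding Op_def OPT_def using fin ne by (intro Min_in) auto
  then obtain S where S: "S \<subseteq> R" "card S = K" and optS: "Op = (\<Sum>i=1..V. \<Prod>j\<in>S. p j i)"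
    by auto
  have step: "f t - Op \<le> (1 - 1/K) * (f (t-1) - Op) \<and> f t \<le> f (t-1)" if t: "t\<in>{1..K}" for t
  proof -
    define b where "b = bvec eps p js (t-1)"
    define S' where "S' = S \<inter> avail R js (t-1)"
    define C where "C = S \<inter> js ` {1..t-1}"
    have S'eq: "S' = S - C" using avail_eq[of R js "t-1"] S S'_def C_def by auto
    have finS: "finite S" using S assms(4) finite_subset by auto
    have pS: "\<forall>j\<in>S. \<forall>i\<in>{1..V}. 0 \<le> p j i \<and> p j i \<le> 1" using S assms(6) by auto
    have bnn: "0 \<le> b i \<and> b i \<le> 1" if "i\<in>{1..V}" for i using bnd t b_def that by auto
    have key1: "b i * (\<Prod>j\<in>S'. p j i) \<le> (\<Prod>j\<in>S. p j i)" if i: "i\<in>{1..V}" for i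
    proof -
      have e1: "b i = eps i * (\<Prod>j\<in>js`{1..t-1}. p j i)"
        proof -
        have "inj_on js {1..t-1}" using inj t by auto
        then have "(\<Prod>j\<in>js`{1..t-1}. p j i) = (\<Prod>s\<in>{1..t-1}. p (js s) i)"
          by (simp add: prod.reindex)
        then show ?thesis by (simp add: bvec_prod b_def)
      qed
      have sub: "js`{1..t-1} \<subseteq> R" using jsR t by auto
      have "(\<Prod>j\<in>js`{1..t-1}. p j i) \<le> (\<Prod>j\<in>C. p j i)"
        by (rule prod_superset_le) (use sub assms(6) i C_def in auto)
      then have l1: "b i \<le> eps i * (\<Prod>j\<in>C. p j i)"
        unfolding e1 using assms(3) i by (auto intro: mult_left_mono)
      have S'nn: "0 \<le> (\<Prod>j\<in>S'. p j i)" using pS i S'_def by (auto intro!: prod_nonneg)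
      have "b i * (\<Prod>j\<in>S'. p j i) \<le> eps i * (\<Prod>j\<in>C. p j i) * (\<Prod>j\<in>S'. p j i)"
        using mult_right_mono[OF l1 S'nn] .
      also have "\<dots> = eps i * (\<Prod>j\<in>S. p j i)"
        using prod.subset_diff[of C S "\<lambda>j. p j i"] finS S'eq C_def by (simp add: mult_ac)
      also have "\<dots> \<le> (\<Prod>j\<in>S. p j i)"
      proof -
        have "0 \<le> (\<Prod>j\<in>S. p j i)" using pS i by (auto intro!: prod_nonneg)
        then show ?thesis using assms(3) i mult_right_mono[of "eps i" 1] by auto
      qed
      finally show ?thesis .
    qed
    have key2: "b i * (1 - (\<Prod>j\<in>S'. p j i)) \<le> (\<Sum>j\<in>S'. b i * (1 - p j i))" if i: "i\<in>{1..V}" for i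
    proof -
      have "1 - (\<Prod>j\<in>S'. p j i) \<le> (\<Sum>j\<in>S'. 1 - p j i)"
        by (rule one_minus_prod_le) (use finS pS i S'_def in auto)
      then have "b i * (1 - (\<Prod>j\<in>S'. p j i)) \<le> b i * (\<Sum>j\<in>S'. 1 - p j i)"
        using bnn[OF i] by (intro mult_left_mono) auto
      then show ?thesis by (simp add: sum_distrib_left)
    qed
    define D where "D j = (\<Sum>i=1..V. b i) - (\<Sum>i=1..V. b i * p j i)" for j
    have Dsum: "D j = (\<Sum>i=1..V. b i * (1 - p j i))" for j
      by (simp add: D_def algebra_simps sum_subtractf)
    have ft: "bvec eps p js t = (\<lambda>i. b i * p (js t) i)" using t by (cases t) (auto simp: b_def)
    have ft': "f t = (\<Sum>i=1..V. b i * p (js t) i)" unfolding f_def ft ..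
    have ft1: "f (t-1) = (\<Sum>i=1..V. b i)" by (simp add: f_def b_def)
    have greedy: "D j \<le> D (js t)" if "j \<in> avail R js (t-1)" for j
      using g t that by (auto simp: D_def b_def)
    have Dnn: "0 \<le> D (js t)"
      unfolding Dsum using bnn jsR[OF t] assms(6) by (auto intro!: sum_nonneg mult_nonneg_nonneg)
    have "f (t-1) - Op \<le> f (t-1) - (\<Sum>i=1..V. b i * (\<Prod>j\<in>S'. p j i))"
      unfolding optS using key1 by (auto intro!: sum_mono)
    also have "\<dots> = (\<Sum>i=1..V. b i * (1 - (\<Prod>j\<in>S'. p j i)))"
      unfolding ft1 by (simp add: right_diff_distrib sum_subtractf)
    also have "\<dots> \<le> (\<Sum>i=1..V. \<Sum>j\<in>S'. b i * (1 - p j i))"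
      using key2 by (auto intro!: sum_mono)
    also have "\<dots> = (\<Sum>j\<in>S'. D j)" by (simp add: Dsum sum.swap[of _ S'])
    also have "\<dots> \<le> (\<Sum>j\<in>S'. D (js t))"
      using greedy unfolding S'_def by (intro sum_mono) auto
    also have "\<dots> = card S' * D (js t)" by simp
    also have "\<dots> \<le> K * D (js t)"
    proof -
      have "card S' \<le> K" using card_mono[OF finS] S'_def S by auto
      then show ?thesis using Dnn by (auto intro: mult_right_mono)
    qed
    finally have main: "f (t-1) - Op \<le> K * D (js t)" .
    have Deq: "D (js t) = f (t-1) - f t" unfolding D_def ft' ft1 by simp
    have Kp: "(0::real) < K" using assms(2) by simp
    have "(f (t-1) - Op) / K \<le> D (js t)" using main Kp by (simp add: pos_divide_le_eq mult.commute)
    moreover have "(1 - 1/K) * (f (t-1) - Op) = (f (t-1) - Op) - (f (t-1) - Op) / K"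
      by (simp add: algebra_simps diff_divide_distrib)
    ultimately have "f t - Op \<le> (1 - 1/K) * (f (t-1) - Op)" using Deq by linarith
    then show ?thesis using Dnn Deq by simp
  qed
  have ind: "f t - Op \<le> (1 - 1/K)^t * (E - Op) \<and> f t \<le> E" if "t \<le> K" for t
    using that
  proof (induction t)
    case 0 then show ?case by (simp add: f_def E_def)
  next
    case (Suc t)
    have s: "f (Suc t) - Op \<le> (1 - 1/K) * (f t - Op) \<and> f (Suc t) \<le> f t"
      using step[of "Suc t"] Suc.prems by auto
    have c0: "0 \<le> 1 - 1 / real K" using assms(2) by simp
    have "(1 - 1/K) * (f t - Op) \<le> (1 - 1/K) * ((1 - 1/K)^t * (E - Op))"
      using Suc c0 by (auto intro: mult_left_mono)
    then show ?case using s Suc by auto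
  qed
  define c where "c = (1 - 1 / real K)^K"
  have c0: "0 \<le> c" unfolding c_def using assms(2) by simp
  have cle: "c \<le> 1 / exp 1"
  proof -
    have "1 - 1/real K \<le> exp(-1/K)" using exp_ge_add_one_self[of "-1/K"] by simp
    then have "c \<le> exp(-1/K)^K" unfolding c_def by (rule power_mono) (use assms(2) in simp)
    also have "exp(-1/K)^K = exp(-1)" using exp_of_nat_mult[of K "-1/K"] assms(2) by simp
    finally show ?thesis by (simp add: exp_minus field_simps)
  qed
  have F1: "f K \<le> Op + c * (E - Op)" and F2: "f K \<le> E" using ind[of K] c_def by auto
  have ie: "0 < 1 / exp (1::real)" "1 / exp (1::real) < 1" by auto
  show ?thesis
  proof (cases "E \<ge> Op")
    case True
    have "c * (E - Op) \<le> (1 / exp 1) * (E - Op)" using mult_right_mono[OF cle, of "E - Op"] True by simp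
    then show ?thesis using F1 unfolding f_def E_def Op_def by (simp add: algebra_simps)
  next
    case False
    have "(1 - 1/exp 1) * (E - Op) \<le> 0" using False ie by (auto intro: mult_nonneg_nonpos)
    then show ?thesis using F2 unfolding f_def E_def Op_def by (simp add: algebra_simps)
  qed
qed

end
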